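(* Let $\Omega\subset\mathbb{R}^2$ be a region of finite area $|\Omega|$ and let $T\subset\Omega$ be a convex polygon with area $|T|$ and perimeter length $L(T)$. Fix $r_{max}>0$ and assume that every point within distance $r_{max}$ of $T$ lies in $\Omega$. A directional distance sensor is placed at a location $(x,y)$ uniformly distributed in $\Omega$ with direction $\theta$ uniformly distributed in $[0,2\pi)$, independently. Its measured distance is $s=\min\{t\in[0,r_{max}] : (x+t\cos\theta,\,y+t\sin\theta)\in T\}$ if this set is nonempty, and $s=\emptyset$ (no detection) otherwise. Then for every $0\le r\le r_{max}$, $$\Pr(s\le r)=\frac{r\,L(T)+\pi |T|}{\pi |\Omega|},$$ where the event $s\le r$ excludes the no-detection outcome.
   Context: In particular $s=0$ when the sensor lies in $T$. Probabilities are geometric probabilities: the probability of a set $X$ of sensor positions $(x,y,\theta)$ equals $\iiint_X dx\,dy\,d\theta/(2\pi|\Omega|)$. *)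

theory Defs
  imports "HOL-Analysis.Analysis"
begin

definition area :: "(real \<times> real) set \<Rightarrow> real" where
  "area A = measure lebesgue A"

definition convex_polygon :: "(real \<times> real) set \<Rightarrow> bool" where
  "convex_polygon T \<longleftrightarrow> polytope T \<and> aff_dim T = 2"

definition perimeter :: "(real \<times> real) set \<Rightarrow> real" where
  "perimeter T = (\<Sum>E\<in>{E. E face_of T \<and> aff_dim E = 1}. diameter E)"

text \<open>Measured distance of the sensor at (x,y) with direction theta; None = no detection.\<close>
definition sensor_dist ::
  "(real \<times> real) set \<Rightarrow> real \<Rightarrow> real \<times> real \<Rightarrow> real \<Rightarrow> real option" where
  "sensor_dist T rmax p \<theta> =
     (let D = {t\<in>{0..rmax}. (fst p + t * cos \<theta>, snd p + t * sin \<theta>) \<in> T}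
      in if D = {} then None else Some (Inf D))"

definition geom_prob :: "(real \<times> real) set \<Rightarrow> ((real \<times> real) \<times> real) set \<Rightarrow> real" where
  "geom_prob \<Omega> X = measure lebesgue (X \<inter> (\<Omega> \<times> {0..<2*pi})) / (2 * pi * area \<Omega>)"

end

theory Submission
  imports Defs
begin

definition vec2 :: "real \<times> real \<Rightarrow> real^2" where
  "vec2 p = (\<chi> i. if i = 1 then fst p else snd p)"

lemma vec2_nth [simp]: "vec2 p $ 1 = fst p" "vec2 p $ 2 = snd p"
  by (auto simp: vec2_def)

lemma linear_vec2: "linear vec2"
  by (auto simp: linear_iff vec_eq_iff vec2_def)

lemma cont_vec2: "continuous_on UNIV vec2"
  by (simp add: linear_continuous_on linear_linear linear_vec2)

lemma inj_vec2: "inj vec2"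
  by (rule inj_on_inverseI[of _ "\<lambda>z. (z$1, z$2)"]) simp

lemma box_Pair_eq2: "box (a, c) (b, d) = box a b \<times> box (c::real) (d::real)"
  by (auto simp: box_def Basis_prod_def ball_Un)

lemma vec2_vimage_box: "vec2 -` box l u = box (l$1, l$2) (u$1, u$2)"
  by (auto simp: mem_box_cart box_Pair_eq2 forall_2)

lemma prod_Basis_2: "(\<Prod>b\<in>(Basis::(real^2) set). f b) = f (axis 1 1) * f (axis 2 1)"
proof -
  have "(Basis::(real^2) set) = {axis 1 1, axis 2 1}"
    by (auto simp: Basis_vec_def UNIV_2)
  moreover have "axis 1 (1::real) \<noteq> (axis 2 1 :: real^2)"
    by (auto simp: axis_eq_axis)
  ultimately show ?thesis by (metis (no_types, lifting) empty_iff finite.emptyI finite_insert insert_iff mult.comm_neutral prod.empty prod.insert)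
qed

lemma lborel_vec2: "distr lborel borel vec2 = lborel"
proof (rule lborel_eqI[symmetric])
  fix l u :: "real^2"
  assume lu: "\<And>b. b \<in> Basis \<Longrightarrow> l \<bullet> b \<le> u \<bullet> b"
  have m: "vec2 \<in> borel_measurable lborel"
    using borel_measurable_continuous_onI[OF cont_vec2] by simp
  have "l$1 \<le> u$1" "l$2 \<le> u$2" using lu[of "axis 1 1"] lu[of "axis 2 1"]
    by (auto simp: cart_eq_inner_axis Basis_vec_def)
  then show "emeasure (distr lborel borel vec2) (box l u) = (\<Prod>b\<in>Basis. (u - l) \<bullet> b)"
  proof -
    have "emeasure (distr lborel borel vec2) (box l u) = emeasure lborel (vec2 -` box l u \<inter> space lborel)"
      by (rule emeasure_distr[OF m]) simp
    also have "\<dots> = emeasure lborel (box (l$1, l$2) (u$1, u$2))"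
      by (simp add: vec2_vimage_box)
    also have "\<dots> = ennreal ((u$1 - l$1) * (u$2 - l$2))"
      using \<open>l$1 \<le> u$1\<close> \<open>l$2 \<le> u$2\<close>
      by (simp add: emeasure_lborel_box_eq Basis_prod_def)
    finally show ?thesis
      by (simp add: prod_Basis_2 cart_eq_inner_axis[symmetric])
  qed
qed simp

lemma measure_vec2:
  assumes "compact S"
  shows "measure lebesgue (vec2 ` S) = measure lebesgue S"
proof -
  have m: "vec2 \<in> measurable lborel borel"
    using borel_measurable_continuous_onI[OF cont_vec2] by simp
  have cS: "compact (vec2 ` S)"
    by (rule compact_continuous_image[OF continuous_on_subset[OF cont_vec2] assms]) simp
  have "emeasure lborel (vec2 ` S) = emeasure (distr lborel borel vec2) (vec2 ` S)"
    by (simp add: lborel_vec2)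
  also have "\<dots> = emeasure lborel (vec2 -` (vec2 ` S) \<inter> space lborel)"
    by (rule emeasure_distr[OF m]) (simp add: cS borel_compact)
  also have "\<dots> = emeasure lborel S"
    using inj_vec2 by (simp add: inj_vimage_image_eq)
  finally have "emeasure lborel (vec2 ` S) = emeasure lborel S" .
  then have "measure lborel (vec2 ` S) = measure lborel S"
    by (simp add: measure_def)
  then show ?thesis
    by (simp add: cS assms borel_compact)
qed

lemma measure_lin2:
  fixes \<alpha> \<beta> \<gamma> \<delta> :: real and S :: "(real\<times>real) set"
  assumes "compact S"
  shows "measure lebesgue ((\<lambda>p. (\<alpha>* fst p + \<beta>* snd p, \<gamma>* fst p + \<delta>* snd p)) ` S)
         = \<bar>\<alpha>*\<delta> - \<beta>*\<gamma>\<bar> * measure lebesgue S"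
proof -
  define L where "L = (\<lambda>p::real\<times>real. (\<alpha>* fst p + \<beta>* snd p, \<gamma>* fst p + \<delta>* snd p))"
  define L' where "L' = (\<lambda>z::real^2. (\<chi> i. if i = 1 then \<alpha>*(z$1) + \<beta>*(z$2) else \<gamma>*(z$1) + \<delta>*(z$2)) :: real^2)"
  have linL: "linear L'"
    by (auto simp: linear_iff vec_eq_iff L'_def algebra_simps)
  have contL: "continuous_on UNIV L"
    unfolding L_def by (intro continuous_intros)
  have cLS: "compact (L ` S)"
    by (rule compact_continuous_image[OF continuous_on_subset[OF contL] assms]) simp
  have comm: "vec2 ` (L ` S) = L' ` (vec2 ` S)"
  proof -
    have "vec2 (L p) = L' (vec2 p)" for p
      by (auto simp: vec_eq_iff L_def L'_def vec2_def)
    then show ?thesis by (auto simp: image_image)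
  qed
  have detL: "det (matrix L') = \<alpha>*\<delta> - \<beta>*\<gamma>"
    by (simp add: det_2 matrix_def L'_def axis_def)
  have "measure lebesgue (L ` S) = measure lebesgue (vec2 ` (L ` S))"
    by (simp add: measure_vec2 cLS)
  also have "\<dots> = \<bar>det (matrix L')\<bar> * measure lebesgue (vec2 ` S)"
    unfolding comm
    by (rule measure_linear_image[OF linL]) (simp add: lmeasurable_compact compact_continuous_image[OF continuous_on_subset[OF cont_vec2] assms])
  also have "\<dots> = \<bar>\<alpha>*\<delta> - \<beta>*\<gamma>\<bar> * measure lebesgue S"
    by (simp add: detL measure_vec2 assms)
  finally show ?thesis unfolding L_def .
qed

lemma para_eq:
  "(\<lambda>(q,t). q - t *\<^sub>R u) ` (closed_segment v w \<times> {0..r}) =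
   (+) v ` ((\<lambda>p. (fst (w-v) * fst p + (- fst u) * snd p, snd (w-v) * fst p + (- snd u) * snd p))
       ` cbox (0,0) (1, r::real))"
proof -
  have "(\<lambda>(q,t). q - t *\<^sub>R u) ` (closed_segment v w \<times> {0..r}) =
        (\<lambda>(s,t). v + s *\<^sub>R (w - v) - t *\<^sub>R u) ` ({0..1} \<times> {0..r})"
  proof -
    have seg: "closed_segment v w = (\<lambda>s. v + s *\<^sub>R (w - v)) ` {0..1}"
      unfolding closed_segment_def by (auto simp: image_iff algebra_simps)
    show ?thesis unfolding seg
    proof (rule set_eqI, rule iffI)
      fix x assume "x \<in> (\<lambda>(q,t). q - t *\<^sub>R u) ` ((\<lambda>s. v + s *\<^sub>R (w - v)) ` {0..1} \<times> {0..r})"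
      then obtain s t where st: "s\<in>{0..1}" "t\<in>{0..r}" "x = v + s *\<^sub>R (w - v) - t *\<^sub>R u" by auto
      show "x \<in> (\<lambda>(s,t). v + s *\<^sub>R (w - v) - t *\<^sub>R u) ` ({0..1} \<times> {0..r})"
        by (rule image_eqI[where x="(s,t)"]) (use st in auto)
    next
      fix x assume "x \<in> (\<lambda>(s,t). v + s *\<^sub>R (w - v) - t *\<^sub>R u) ` ({0..1} \<times> {0..r})"
      then obtain s t where st: "s\<in>{0..1}" "t\<in>{0..r}" "x = v + s *\<^sub>R (w - v) - t *\<^sub>R u" by auto
      show "x \<in> (\<lambda>(q,t). q - t *\<^sub>R u) ` ((\<lambda>s. v + s *\<^sub>R (w - v)) ` {0..1} \<times> {0..r})"
        by (rule image_eqI[where x="(v + s *\<^sub>R (w - v), t)"]) (use st in auto)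
    qed
  qed
  also have "\<dots> = (+) v ` ((\<lambda>p. (fst (w-v) * fst p + (- fst u) * snd p, snd (w-v) * fst p + (- snd u) * snd p))
       ` cbox (0,0) (1, r::real))"
    by (force simp: cbox_Pair_eq image_iff prod_eq_iff algebra_simps)
  finally show ?thesis .
qed

lemma para_compact:
  fixes v w u :: "real \<times> real"
  shows "compact ((\<lambda>(q,t). q - t *\<^sub>R u) ` (closed_segment v w \<times> {0..r}))"
  by (intro compact_continuous_image compact_Times compact_segment compact_Icc)
     (auto intro!: continuous_intros simp: case_prod_unfold)

lemma para_area:
  fixes v w u :: "real \<times> real"
  assumes "r \<ge> 0"
  shows "measure lebesgue ((\<lambda>(q,t). q - t *\<^sub>R u) ` (closed_segment v w \<times> {0..r}))
     = r * \<bar>snd (w-v) * fst u - fst (w-v) * snd u\<bar>"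
  unfolding para_eq measure_translation
  using assms
  by (subst measure_lin2) (auto simp: measure_lborel_cbox_eq Basis_prod_def abs_mult algebra_simps)

lemma negligible_segment2:
  fixes v w :: "real \<times> real"
  shows "negligible (closed_segment v w)"
proof -
  have "negligible (span {w - v})"
    by (rule negligible_lowdim) (use dim_le_card[of "{w-v}" "span {w - v}"] in auto)
  then have "negligible ((+) v ` span {w - v})"
    by (rule negligible_translation)
  moreover have "closed_segment v w \<subseteq> (+) v ` span {w - v}"
  proof
    fix x assume "x \<in> closed_segment v w"
    then obtain s where "x = v + s *\<^sub>R (w - v)"
      unfolding closed_segment_def by (auto simp: algebra_simps)
    then show "x \<in> (+) v ` span {w - v}"
      by (auto intro: span_mul span_base)
  qed
  ultimately show ?thesis by (rule negligible_subset)
qed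

lemma negligible_line2:
  fixes c d :: "real \<times> real"
  shows "negligible ((+) c ` span {d})"
proof -
  have "negligible (span {d})"
    by (rule negligible_lowdim) (use dim_le_card[of "{d}" "span {d}"] in auto)
  then show ?thesis by (rule negligible_translation)
qed

lemma diameter_segment2:
  fixes v w :: "real \<times> real"
  shows "diameter (closed_segment v w) = dist v w"
proof (rule antisym)
  show "diameter (closed_segment v w) \<le> dist v w"
  proof (rule diameter_le)
    fix x y assume "x \<in> closed_segment v w" "y \<in> closed_segment v w"
    then obtain s s' where s: "0 \<le> s" "s \<le> 1" "x = v + s *\<^sub>R (w - v)"
       and s': "0 \<le> s'" "s' \<le> 1" "y = v + s' *\<^sub>R (w - v)"
      unfolding closed_segment_def by (auto simp: algebra_simps)
    have "x - y = (s - s') *\<^sub>R (w - v)" unfolding s(3) s'(3) by (simp add: algebra_simps)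
    then have "norm (x - y) = \<bar>s - s'\<bar> * norm (w - v)" by simp
    also have "\<dots> \<le> 1 * norm (w - v)"
      by (rule mult_right_mono) (use s s' in auto)
    finally show "norm (x - y) \<le> dist v w" by (simp add: dist_norm norm_minus_commute)
  qed simp
  show "dist v w \<le> diameter (closed_segment v w)"
    by (rule diameter_bounded_bound) (auto simp: compact_imp_bounded)
qed

lemma two_perp:
  fixes a c d :: "real \<times> real"
  assumes "norm a = 1" "norm c = 1" "d \<noteq> 0" "a \<bullet> d = 0" "c \<bullet> d = 0"
  shows "c = a \<or> c = - a"
proof -
  obtain a1 a2 where a: "a = (a1, a2)" by fastforce
  obtain c1 c2 where c: "c = (c1, c2)" by fastforce
  obtain d1 d2 where d: "d = (d1, d2)" by fastforce
  have na: "a1^2 + a2^2 = 1" using assms(1) a by (simp add: norm_Pair)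
  have nc: "c1^2 + c2^2 = 1" using assms(2) c by (simp add: norm_Pair)
  have ad: "a1*d1 + a2*d2 = 0" using assms(4) a d by simp
  have cd: "c1*d1 + c2*d2 = 0" using assms(5) c d by simp
  have dn: "d1 \<noteq> 0 \<or> d2 \<noteq> 0" using assms(3) d by (auto simp: zero_prod_def)
  have det: "a1*c2 - a2*c1 = 0"
  proof -
    have "(a1*c2 - a2*c1) * d1 = 0" using ad cd by algebra
    moreover have "(a1*c2 - a2*c1) * d2 = 0" using ad cd by algebra
    ultimately show ?thesis using dn by auto
  qed
  define k where "k = a1*c1 + a2*c2"
  have c1: "c1 = k * a1" using det na unfolding k_def by algebra
  have c2: "c2 = k * a2" using det na unfolding k_def by algebra
  have "k^2 = 1"
  proof -
    have "k^2 * (a1^2 + a2^2) = 1" using nc c1 c2 by (simp add: power2_eq_square algebra_simps)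
    then show ?thesis using na by simp
  qed
  then have "k = 1 \<or> k = -1"
    by (metis power2_eq_1_iff)
  then show ?thesis using a c c1 c2 by auto
qed

lemma cross_perp:
  fixes a d u :: "real \<times> real"
  assumes "norm a = 1" "a \<bullet> d = 0"
  shows "\<bar>snd d * fst u - fst d * snd u\<bar> = norm d * \<bar>a \<bullet> u\<bar>"
proof -
  obtain a1 a2 where a: "a = (a1, a2)" by fastforce
  obtain u1 u2 where u: "u = (u1, u2)" by fastforce
  obtain d1 d2 where d: "d = (d1, d2)" by fastforce
  have na: "a1^2 + a2^2 = 1" using assms(1) a by (simp add: norm_Pair)
  have ad: "a1*d1 + a2*d2 = 0" using assms(2) a d by simp
  define l where "l = a1*d2 - a2*d1"
  have d1: "d1 = - l * a2" using ad na unfolding l_def by algebra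
  have d2: "d2 = l * a1" using ad na unfolding l_def by algebra
  have nd: "norm d = \<bar>l\<bar>"
  proof -
    have "d1^2 + d2^2 = l^2 * (a1^2 + a2^2)" using d1 d2 by (simp add: power2_eq_square algebra_simps)
    then have "d1^2 + d2^2 = l^2" using na by simp
    then show ?thesis using d by (simp add: norm_Pair)
  qed
  have "snd d * fst u - fst d * snd u = l * (a \<bullet> u)"
    using d d1 d2 a u by (simp add: algebra_simps)
  then show ?thesis using nd by (simp add: abs_mult)
qed

locale poly2 =
  fixes T :: "(real \<times> real) set" and F :: "(real \<times> real) set set"
    and a :: "(real \<times> real) set \<Rightarrow> real \<times> real" and b :: "(real \<times> real) set \<Rightarrow> real"
  assumes finF: "finite F"
    and Tdef: "T = {x. \<forall>h\<in>F. a h \<bullet> x \<le> b h}"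
    and hdef: "\<And>h. h \<in> F \<Longrightarrow> h = {x. a h \<bullet> x \<le> b h}"
    and unit: "\<And>h. h \<in> F \<Longrightarrow> norm (a h) = 1"
    and seg: "\<And>h. h \<in> F \<Longrightarrow> \<exists>v w. T \<inter> {x. a h \<bullet> x = b h} = closed_segment v w"
    and cT: "compact T"
begin

definition E :: "(real \<times> real) set \<Rightarrow> (real \<times> real) set" where
  "E h = T \<inter> {x. a h \<bullet> x = b h}"

definition P :: "real \<times> real \<Rightarrow> real \<Rightarrow> (real \<times> real) set \<Rightarrow> (real \<times> real) set" where
  "P u r h = (\<lambda>(q,t). q - t *\<^sub>R u) ` (E h \<times> {0..r})"

definition H :: "real \<times> real \<Rightarrow> (real \<times> real) set set" where
  "H u = {h\<in>F. a h \<bullet> u < 0}"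

definition S :: "real \<times> real \<Rightarrow> real \<Rightarrow> (real \<times> real) set" where
  "S u r = {p. \<exists>t\<in>{0..r}. p + t *\<^sub>R u \<in> T}"

lemma memT: "x \<in> T \<longleftrightarrow> (\<forall>h\<in>F. a h \<bullet> x \<le> b h)"
  using Tdef by auto

lemma E_sub: "E h \<subseteq> T" by (auto simp: E_def)

lemma negligible_E: "h \<in> F \<Longrightarrow> negligible (E h)"
  using seg[of h] negligible_segment2 unfolding E_def by auto

lemma compact_P: "h \<in> F \<Longrightarrow> compact (P u r h)"
proof -
  assume "h \<in> F"
  then obtain v w where vw: "E h = closed_segment v w" using seg unfolding E_def by blast
  show ?thesis unfolding P_def vw by (rule para_compact)
qed

lemma exit_edge:
  assumes q: "q \<in> T" and no: "\<forall>h\<in>F. a h \<bullet> q = b h \<longrightarrow> a h \<bullet> u \<ge> 0"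
  shows "\<exists>e>0. \<forall>s. 0 \<le> s \<and> s \<le> e \<longrightarrow> q - s *\<^sub>R u \<in> T"
proof -
  define e where "e h = (if a h \<bullet> u \<ge> 0 then 1 else (b h - a h \<bullet> q) / (- (a h \<bullet> u)))" for h
  have epos: "e h > 0" if "h \<in> F" for h
  proof (cases "a h \<bullet> u \<ge> 0")
    case False
    then have "a h \<bullet> q \<noteq> b h" using no that by auto
    moreover have "a h \<bullet> q \<le> b h" using q that memT by auto
    ultimately have "0 < (b h - a h \<bullet> q) / (- (a h \<bullet> u))"
      using False by (intro divide_pos_pos) auto
    then show ?thesis using False by (simp add: e_def)
  qed (auto simp: e_def)
  define e0 where "e0 = Min (insert 1 (e ` F))"
  have "e0 > 0" unfolding e0_def using finF epos by auto
  moreover have "q - s *\<^sub>R u \<in> T" if s: "0 \<le> s" "s \<le> e0" for s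
  proof -
    have "a h \<bullet> (q - s *\<^sub>R u) \<le> b h" if h: "h \<in> F" for h
    proof (cases "a h \<bullet> u \<ge> 0")
      case True
      have "a h \<bullet> q \<le> b h" using q h memT by auto
      moreover have "s * (a h \<bullet> u) \<ge> 0" using True s by auto
      ultimately show ?thesis by (simp add: inner_diff_right)
    next
      case False
      have "e0 \<le> e h" unfolding e0_def using finF h by auto
      then have "s \<le> (b h - a h \<bullet> q) / (- (a h \<bullet> u))" using s False by (auto simp: e_def)
      moreover have "0 < - (a h \<bullet> u)" using False by simp
      ultimately have "s * (- (a h \<bullet> u)) \<le> b h - a h \<bullet> q" using pos_le_divide_eq by blast
      then show ?thesis by (simp add: inner_diff_right algebra_simps)
    qed
    then show ?thesis using memT by auto
  qed
  ultimately show ?thesis by blast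
qed

lemma cover:
  assumes r: "r \<ge> 0"
  shows "S u r = T \<union> \<Union>(P u r ` H u)"
proof (rule set_eqI, rule iffI)
  fix p assume "p \<in> S u r"
  then obtain t1 where t1: "t1 \<in> {0..r}" "p + t1 *\<^sub>R u \<in> T" by (auto simp: S_def)
  show "p \<in> T \<union> \<Union>(P u r ` H u)"
  proof (cases "p \<in> T")
    case False
    define D where "D = {t\<in>{0..r}. p + t *\<^sub>R u \<in> T}"
    have "closed D"
    proof -
      have "closed ((\<lambda>t. p + t *\<^sub>R u) -` T)"
        by (rule continuous_closed_vimage) (auto intro!: continuous_intros simp: cT compact_imp_closed)
      then have "closed ({0..r} \<inter> (\<lambda>t. p + t *\<^sub>R u) -` T)" by (intro closed_Int) auto
      moreover have "D = {0..r} \<inter> (\<lambda>t. p + t *\<^sub>R u) -` T" by (auto simp: D_def)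
      ultimately show ?thesis by simp
    qed
    moreover have "D \<noteq> {}" using t1 by (auto simp: D_def)
    moreover have bdd: "bdd_below D" by (auto simp: D_def bdd_below_def)
    ultimately have t0D: "Inf D \<in> D" using closed_contains_Inf by blast
    define t0 where "t0 = Inf D"
    have t0: "t0 \<in> {0..r}" "p + t0 *\<^sub>R u \<in> T" using t0D by (auto simp: D_def t0_def)
    have "t0 \<noteq> 0" using t0 False by auto
    then have t0pos: "t0 > 0" using t0 by auto
    define q where "q = p + t0 *\<^sub>R u"
    have "\<exists>h\<in>F. a h \<bullet> q = b h \<and> a h \<bullet> u < 0"
    proof (rule ccontr)
      assume "\<not> ?thesis"
      then have "\<forall>h\<in>F. a h \<bullet> q = b h \<longrightarrow> a h \<bullet> u \<ge> 0" by auto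
      then obtain e where e: "e > 0" "\<And>s. 0 \<le> s \<and> s \<le> e \<Longrightarrow> q - s *\<^sub>R u \<in> T"
        using exit_edge t0(2) q_def by blast
      define s where "s = min e t0"
      have "q - s *\<^sub>R u \<in> T" using e t0pos by (auto simp: s_def)
      then have "p + (t0 - s) *\<^sub>R u \<in> T" by (simp add: q_def algebra_simps)
      moreover have "t0 - s \<in> {0..r}" using t0 e t0pos by (auto simp: s_def)
      ultimately have "t0 - s \<in> D" by (auto simp: D_def)
      then have "t0 \<le> t0 - s" unfolding t0_def using bdd by (rule cInf_lower)
      moreover have "s > 0" using e t0pos by (auto simp: s_def)
      ultimately show False by simp
    qed
    then obtain h where h: "h \<in> F" "a h \<bullet> q = b h" "a h \<bullet> u < 0" by blast
    have "q \<in> E h" using h t0 by (auto simp: E_def q_def)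
    then have "p \<in> P u r h" unfolding P_def
      by (intro image_eqI[where x="(q, t0)"]) (use t0 in \<open>auto simp: q_def\<close>)
    moreover have "h \<in> H u" using h by (auto simp: H_def)
    ultimately show ?thesis by auto
  qed simp
next
  fix p assume "p \<in> T \<union> \<Union>(P u r ` H u)"
  then show "p \<in> S u r"
  proof
    assume "p \<in> T" then show ?thesis using r by (auto simp: S_def intro!: bexI[where x=0])
  next
    assume "p \<in> \<Union>(P u r ` H u)"
    then obtain h q t where qt: "q \<in> E h" "t \<in> {0..r}" "p = q - t *\<^sub>R u"
      by (auto simp: P_def)
    have "q \<in> T" using E_sub qt(1) by blast
    then show ?thesis using qt by (auto simp: S_def intro!: bexI[where x=t])
  qed
qed

lemma neg_T_P:
  assumes "h \<in> H u"
  shows "negligible (T \<inter> P u r h)"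
proof (rule negligible_subset[OF negligible_E])
  show "h \<in> F" using assms by (auto simp: H_def)
  show "T \<inter> P u r h \<subseteq> E h"
  proof
    fix x assume "x \<in> T \<inter> P u r h"
    then obtain q t where x: "x \<in> T" "q \<in> E h" "t \<in> {0..r}" "x = q - t *\<^sub>R u"
      by (auto simp: P_def)
    have "a h \<bullet> x \<le> b h" using x(1) \<open>h \<in> F\<close> memT by auto
    moreover have "a h \<bullet> x = b h - t * (a h \<bullet> u)" using x(2,4) by (auto simp: E_def inner_diff_right)
    ultimately have "t * (a h \<bullet> u) \<ge> 0" by simp
    moreover have "a h \<bullet> u < 0" using assms by (auto simp: H_def)
    ultimately have "t = 0" using x(3) by (auto simp: mult_nonneg_nonpos zero_le_mult_iff)
    then show "x \<in> E h" using x by simp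
  qed
qed

lemma E_inter_single:
  assumes h: "h \<in> H u" and h': "h' \<in> H u" and ne: "h \<noteq> h'"
    and y: "y \<in> E h" "y \<in> E h'" and z: "z \<in> E h" "z \<in> E h'"
  shows "y = z"
proof (rule ccontr)
  assume yz: "y \<noteq> z"
  have F: "h \<in> F" "h' \<in> F" using h h' by (auto simp: H_def)
  have "a h \<bullet> (y - z) = 0" "a h' \<bullet> (y - z) = 0"
    using y z by (auto simp: E_def inner_diff_right)
  then have "a h' = a h \<or> a h' = - a h"
    using two_perp[of "a h" "a h'" "y - z"] unit F yz by auto
  then show False
  proof
    assume eq: "a h' = a h"
    then have "b h' = b h" using y by (auto simp: E_def)
    then have "h = h'" using hdef[OF F(1)] hdef[OF F(2)] eq by auto
    then show False using ne by simp
  next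
    assume "a h' = - a h"
    then have "a h' \<bullet> u > 0" using h by (auto simp: H_def)
    then show False using h' by (auto simp: H_def)
  qed
qed

lemma neg_P_P:
  assumes h: "h \<in> H u" and h': "h' \<in> H u" and ne: "h \<noteq> h'"
  shows "negligible (P u r h \<inter> P u r h')"
proof -
  have key: "\<exists>c\<in>E h \<inter> E h'. \<exists>t. x = c - t *\<^sub>R u" if x: "x \<in> P u r h \<inter> P u r h'" for x
  proof -
    obtain q t where qt: "q \<in> E h" "t \<in> {0..r}" "x = q - t *\<^sub>R u" using x by (auto simp: P_def)
    obtain q' t' where qt': "q' \<in> E h'" "t' \<in> {0..r}" "x = q' - t' *\<^sub>R u" using x by (auto simp: P_def)
    have F: "h \<in> F" "h' \<in> F" using h h' by (auto simp: H_def)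
    have "\<not> t < t'" if "h1 \<in> H u" "q1 \<in> E h1" "q2 \<in> E h2" "h2 \<in> H u"
      "q1 - t *\<^sub>R u = q2 - t' *\<^sub>R u" for t t' q1 q2 h1 h2
    proof
      assume tt: "t < t'"
      have "q2 = q1 + (t' - t) *\<^sub>R u" using that(5) by (simp add: algebra_simps)
      then have "a h2 \<bullet> q2 = a h2 \<bullet> q1 + (t' - t) * (a h2 \<bullet> u)"
        by (simp add: inner_add_right)
      moreover have "a h2 \<bullet> q2 = b h2" using that(3) by (auto simp: E_def)
      ultimately have "a h2 \<bullet> q1 = b h2 - (t' - t) * (a h2 \<bullet> u)" by simp
      moreover have "(t' - t) * (a h2 \<bullet> u) < 0"
        using tt that(4) by (auto simp: H_def mult_pos_neg)
      moreover have "a h2 \<bullet> q1 \<le> b h2"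
      proof -
        have "q1 \<in> T" using that(2) E_sub by blast
        then show ?thesis using that(4) memT by (auto simp: H_def)
      qed
      ultimately show False by simp
    qed
    note nt = this
    have "\<not> t < t'" by (rule nt[of h q q' h']) (use qt qt' h h' in auto)
    moreover have "\<not> t' < t" by (rule nt[of h' q' q h]) (use qt qt' h h' in auto)
    ultimately have "t = t'" by simp
    then have "q = q'" using qt qt' by simp
    then show ?thesis using qt qt' by auto
  qed
  show ?thesis
  proof (cases "E h \<inter> E h' = {}")
    case True
    then have "P u r h \<inter> P u r h' = {}" using key by blast
    then show ?thesis by simp
  next
    case False
    then obtain c where c: "c \<in> E h \<inter> E h'" by blast
    have "P u r h \<inter> P u r h' \<subseteq> (+) c ` span {u}"
    proof
      fix x assume "x \<in> P u r h \<inter> P u r h'"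
      then obtain c' t where "c' \<in> E h \<inter> E h'" "x = c' - t *\<^sub>R u" using key by blast
      moreover have "c' = c" using E_inter_single[OF h h' ne] c \<open>c' \<in> E h \<inter> E h'\<close> by blast
      ultimately have "x = c + (- t) *\<^sub>R u" by simp
      moreover have "(- t) *\<^sub>R u \<in> span {u}" by (intro span_mul span_base) simp
      ultimately show "x \<in> (+) c ` span {u}" by blast
    qed
    then show ?thesis using negligible_line2 negligible_subset by blast
  qed
qed

lemma area_P:
  assumes h: "h \<in> H u" and r: "r \<ge> 0"
  shows "measure lebesgue (P u r h) = r * (diameter (E h) * (- (a h \<bullet> u)))"
proof -
  have F: "h \<in> F" using h by (auto simp: H_def)
  obtain v w where vw: "E h = closed_segment v w" using seg[OF F] unfolding E_def by blast
  have "v \<in> E h" "w \<in> E h" using vw by auto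
  then have perp: "a h \<bullet> (w - v) = 0" by (auto simp: E_def inner_diff_right)
  have "measure lebesgue (P u r h) = r * \<bar>snd (w-v) * fst u - fst (w-v) * snd u\<bar>"
    unfolding P_def vw by (rule para_area[OF r])
  also have "\<dots> = r * (norm (w - v) * \<bar>a h \<bullet> u\<bar>)"
    using cross_perp[OF unit[OF F] perp] by simp
  also have "\<dots> = r * (diameter (E h) * (- (a h \<bullet> u)))"
    using h by (simp add: vw diameter_segment2 dist_norm norm_minus_commute H_def)
  finally show ?thesis .
qed

lemma compact_S: "r \<ge> 0 \<Longrightarrow> compact (S u r)"
proof -
  assume r: "r \<ge> 0"
  have "S u r = (\<lambda>(q,t). q - t *\<^sub>R u) ` (T \<times> {0..r})"
  proof (rule set_eqI, rule iffI)
    fix p assume "p \<in> S u r"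
    then obtain t where t: "t \<in> {0..r}" "p + t *\<^sub>R u \<in> T" by (auto simp: S_def)
    show "p \<in> (\<lambda>(q,t). q - t *\<^sub>R u) ` (T \<times> {0..r})"
      by (rule image_eqI[where x="(p + t *\<^sub>R u, t)"]) (use t in auto)
  next
    fix p assume "p \<in> (\<lambda>(q,t). q - t *\<^sub>R u) ` (T \<times> {0..r})"
    then obtain q t where "q \<in> T" "t \<in> {0..r}" "p = q - t *\<^sub>R u" by auto
    then show "p \<in> S u r" by (auto simp: S_def intro!: bexI[where x=t])
  qed
  moreover have "compact ((\<lambda>(q,t). q - t *\<^sub>R u) ` (T \<times> {0..r}))"
    by (intro compact_continuous_image compact_Times cT compact_Icc)
       (auto intro!: continuous_intros simp: case_prod_unfold)
  ultimately show ?thesis by simp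
qed

lemma area_S:
  assumes r: "r \<ge> 0"
  shows "measure lebesgue (S u r) = measure lebesgue T + r * (\<Sum>h\<in>F. diameter (E h) * max 0 (- (a h \<bullet> u)))"
proof -
  let ?U = "\<Union>(P u r ` H u)"
  have finH: "finite (H u)" using finF by (auto simp: H_def)
  have HF: "H u \<subseteq> F" by (auto simp: H_def)
  have cU: "compact ?U" using finH HF by (intro compact_UN) (auto intro: compact_P)
  have mT: "T \<in> lmeasurable" using cT lmeasurable_compact by blast
  have mU: "?U \<in> lmeasurable" using cU lmeasurable_compact by blast
  have eqTU: "T \<inter> ?U = \<Union>((\<lambda>h. T \<inter> P u r h) ` H u)" by (rule Int_UN_distrib)
  have negTU: "negligible (T \<inter> ?U)"
    unfolding eqTU
  proof (rule negligible_Union)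
    show "finite ((\<lambda>h. T \<inter> P u r h) ` H u)" using finH by simp
    fix X assume "X \<in> (\<lambda>h. T \<inter> P u r h) ` H u"
    then obtain h where "h \<in> H u" "X = T \<inter> P u r h" by blast
    then show "negligible X" using neg_T_P by blast
  qed
  have "measure lebesgue (S u r) = measure lebesgue (T \<union> ?U)"
    by (simp only: cover[OF r])
  also have "\<dots> = measure lebesgue T + measure lebesgue ?U - measure lebesgue (T \<inter> ?U)"
    using mT mU by (rule measure_Un3)
  also have "measure lebesgue (T \<inter> ?U) = 0" using negTU negligible_imp_measure0 by blast
  also have "measure lebesgue ?U = (\<Sum>h\<in>H u. measure lebesgue (P u r h))"
  proof (rule measure_negligible_finite_Union_image[OF finH])
    show "\<And>x. x \<in> H u \<Longrightarrow> P u r x \<in> lmeasurable"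
    proof -
      fix x assume "x \<in> H u"
      then have "x \<in> F" using HF by blast
      then show "P u r x \<in> lmeasurable" by (intro lmeasurable_compact compact_P)
    qed
    show "pairwise (\<lambda>x y. negligible (P u r x \<inter> P u r y)) (H u)"
      unfolding pairwise_def
    proof (intro ballI impI)
      fix x y assume "x \<in> H u" "y \<in> H u" "x \<noteq> y"
      then show "negligible (P u r x \<inter> P u r y)" by (rule neg_P_P)
    qed
  qed
  also have "\<dots> = (\<Sum>h\<in>H u. r * (diameter (E h) * max 0 (- (a h \<bullet> u))))"
  proof (rule sum.cong[OF refl])
    fix h assume h: "h \<in> H u"
    then have "max 0 (- (a h \<bullet> u)) = - (a h \<bullet> u)" by (simp add: H_def)
    then show "measure lebesgue (P u r h) = r * (diameter (E h) * max 0 (- (a h \<bullet> u)))"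
      using area_P[OF h r] by simp
  qed
  also have "\<dots> = (\<Sum>h\<in>F. r * (diameter (E h) * max 0 (- (a h \<bullet> u))))"
  proof (rule sum.mono_neutral_left[OF finF HF], rule ballI)
    fix h assume "h \<in> F - H u"
    then have "a h \<bullet> u \<ge> 0" by (auto simp: H_def not_less)
    then show "r * (diameter (E h) * max 0 (- (a h \<bullet> u))) = 0" by simp
  qed
  finally show ?thesis by (simp add: sum_distrib_left)
qed

end

lemma cos_L2: "pi/2 \<le> x \<Longrightarrow> x \<le> 3*pi/2 \<Longrightarrow> cos x \<le> 0"
proof -
  assume "pi/2 \<le> x" "x \<le> 3*pi/2"
  then have "cos (x - pi) \<ge> 0" by (intro cos_ge_zero) auto
  moreover have "cos (x - pi) = - cos x" by (simp add: cos_diff)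
  ultimately show ?thesis by simp
qed

lemma cos_L3: "3*pi/2 \<le> x \<Longrightarrow> x \<le> 5*pi/2 \<Longrightarrow> cos x \<ge> 0"
proof -
  assume "3*pi/2 \<le> x" "x \<le> 5*pi/2"
  then have "cos (x - 2*pi) \<ge> 0" by (intro cos_ge_zero) auto
  moreover have "cos (x - 2*pi) = cos x" by (simp add: cos_diff)
  ultimately show ?thesis by simp
qed

lemma cos_L4: "-3*pi/2 \<le> x \<Longrightarrow> x \<le> -pi/2 \<Longrightarrow> cos x \<le> 0"
proof -
  assume "-3*pi/2 \<le> x" "x \<le> -pi/2"
  then have "cos (x + pi) \<ge> 0" by (intro cos_ge_zero) auto
  moreover have "cos (x + pi) = - cos x" by (simp add: cos_add)
  ultimately show ?thesis by simp
qed

lemma cos_L5: "-5*pi/2 \<le> x \<Longrightarrow> x \<le> -3*pi/2 \<Longrightarrow> cos x \<ge> 0"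
proof -
  assume "-5*pi/2 \<le> x" "x \<le> -3*pi/2"
  then have "cos (x + 2*pi) \<ge> 0" by (intro cos_ge_zero) auto
  moreover have "cos (x + 2*pi) = cos x" by (simp add: cos_add)
  ultimately show ?thesis by simp
qed

lemma piece_pos:
  fixes c d \<psi> :: real
  assumes "c \<le> d" "\<And>\<theta>. \<theta> \<in> {c..d} \<Longrightarrow> cos (\<theta> - \<psi>) \<ge> 0"
  shows "((\<lambda>\<theta>. max 0 (cos (\<theta> - \<psi>))) has_integral (sin (d - \<psi>) - sin (c - \<psi>))) {c..d}"
proof -
  have "((\<lambda>\<theta>. cos (\<theta> - \<psi>)) has_integral ((\<lambda>\<theta>. sin (\<theta> - \<psi>)) d - (\<lambda>\<theta>. sin (\<theta> - \<psi>)) c)) {c..d}"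
  proof (rule fundamental_theorem_of_calculus[OF assms(1)])
    fix x assume "x \<in> {c..d}"
    have "((\<lambda>\<theta>. sin (\<theta> - \<psi>)) has_real_derivative cos (x - \<psi>)) (at x within {c..d})"
      by (auto intro!: derivative_eq_intros)
    then show "((\<lambda>\<theta>. sin (\<theta> - \<psi>)) has_vector_derivative cos (x - \<psi>)) (at x within {c..d})"
      by (simp add: has_real_derivative_iff_has_vector_derivative)
  qed
  then have "((\<lambda>\<theta>. cos (\<theta> - \<psi>)) has_integral (sin (d - \<psi>) - sin (c - \<psi>))) {c..d}" by simp
  then show ?thesis
    by (rule has_integral_eq[rotated]) (use assms(2) in auto)
qed

lemma piece_neg:
  fixes c d \<psi> :: real
  assumes "\<And>\<theta>. \<theta> \<in> {c..d} \<Longrightarrow> cos (\<theta> - \<psi>) \<le> 0"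
  shows "((\<lambda>\<theta>. max 0 (cos (\<theta> - \<psi>))) has_integral 0) {c..d}"
proof (rule has_integral_is_0)
  fix x assume "x \<in> {c..d}"
  then have "cos (x - \<psi>) \<le> 0" by (rule assms)
  then show "max 0 (cos (x - \<psi>)) = 0" by simp
qed

lemma sin_3pi2: "sin (3*pi/2) = -1"
proof -
  have "sin (3*pi/2) = sin (pi/2 + pi)" by (simp add: field_simps)
  also have "\<dots> = -1" by (simp only: sin_periodic_pi sin_pi_half)
  finally show ?thesis .
qed

lemma int_cos_plus:
  assumes "0 \<le> \<psi>" "\<psi> < 2*pi"
  shows "((\<lambda>\<theta>. max 0 (cos (\<theta> - \<psi>))) has_integral 2) {0..2*pi}"
proof -
  let ?f = "\<lambda>\<theta>. max 0 (cos (\<theta> - \<psi>))"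
  consider "\<psi> < pi/2" | "pi/2 \<le> \<psi>" "\<psi> \<le> 3*pi/2" | "3*pi/2 < \<psi>" by linarith
  then show ?thesis
  proof cases
    case 1
    have A: "(?f has_integral (sin ((\<psi>+pi/2) - \<psi>) - sin (0 - \<psi>))) {0..\<psi>+pi/2}"
      by (rule piece_pos) (use assms 1 in \<open>auto intro!: cos_ge_zero\<close>)
    have B: "(?f has_integral 0) {\<psi>+pi/2..\<psi>+3*pi/2}"
      by (rule piece_neg) (use assms 1 in \<open>auto intro!: cos_L2\<close>)
    have C: "(?f has_integral (sin (2*pi - \<psi>) - sin ((\<psi>+3*pi/2) - \<psi>))) {\<psi>+3*pi/2..2*pi}"
      by (rule piece_pos) (use assms 1 in \<open>auto intro!: cos_L3\<close>)
    have AB: "(?f has_integral ((sin ((\<psi>+pi/2) - \<psi>) - sin (0 - \<psi>)) + 0)) {0..\<psi>+3*pi/2}"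
      by (rule has_integral_combine[OF _ _ A B]) (use assms in auto)
    have "(?f has_integral ((sin ((\<psi>+pi/2) - \<psi>) - sin (0 - \<psi>)) + 0 + (sin (2*pi - \<psi>) - sin ((\<psi>+3*pi/2) - \<psi>)))) {0..2*pi}"
      by (rule has_integral_combine[OF _ _ AB C]) (use assms 1 in auto)
    then show ?thesis by (simp add: sin_3pi2 sin_2pi_minus)
  next
    case 2
    have A: "(?f has_integral 0) {0..\<psi>-pi/2}"
      by (rule piece_neg) (use assms 2 in \<open>auto intro!: cos_L4\<close>)
    have B: "(?f has_integral (sin ((\<psi>+pi/2) - \<psi>) - sin ((\<psi>-pi/2) - \<psi>))) {\<psi>-pi/2..\<psi>+pi/2}"
      by (rule piece_pos) (use assms 2 in \<open>auto intro!: cos_ge_zero\<close>)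
    have C: "(?f has_integral 0) {\<psi>+pi/2..2*pi}"
      by (rule piece_neg) (use assms 2 in \<open>auto intro!: cos_L2\<close>)
    have AB: "(?f has_integral (0 + (sin ((\<psi>+pi/2) - \<psi>) - sin ((\<psi>-pi/2) - \<psi>)))) {0..\<psi>+pi/2}"
      by (rule has_integral_combine[OF _ _ A]) (use assms 2 B in \<open>auto simp: algebra_simps\<close>)
    have "(?f has_integral (0 + (sin ((\<psi>+pi/2) - \<psi>) - sin ((\<psi>-pi/2) - \<psi>)) + 0)) {0..2*pi}"
      by (rule has_integral_combine[OF _ _ AB C]) (use assms 2 in auto)
    then show ?thesis by (simp add: sin_minus)
  next
    case 3
    have A: "(?f has_integral (sin ((\<psi>-3*pi/2) - \<psi>) - sin (0 - \<psi>))) {0..\<psi>-3*pi/2}"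
      by (rule piece_pos) (use assms 3 in \<open>auto intro!: cos_L5\<close>)
    have B: "(?f has_integral 0) {\<psi>-3*pi/2..\<psi>-pi/2}"
      by (rule piece_neg) (use assms 3 in \<open>auto intro!: cos_L4\<close>)
    have C: "(?f has_integral (sin (2*pi - \<psi>) - sin ((\<psi>-pi/2) - \<psi>))) {\<psi>-pi/2..2*pi}"
      by (rule piece_pos) (use assms 3 in \<open>auto intro!: cos_ge_zero\<close>)
    have AB: "(?f has_integral ((sin ((\<psi>-3*pi/2) - \<psi>) - sin (0 - \<psi>)) + 0)) {0..\<psi>-pi/2}"
      by (rule has_integral_combine[OF _ _ A]) (use assms 3 B in \<open>auto simp: algebra_simps\<close>)
    have "(?f has_integral ((sin ((\<psi>-3*pi/2) - \<psi>) - sin (0 - \<psi>)) + 0 + (sin (2*pi - \<psi>) - sin ((\<psi>-pi/2) - \<psi>)))) {0..2*pi}"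
      by (rule has_integral_combine[OF _ _ AB C]) (use assms 3 in auto)
    moreover have "sin (-3*pi/2) = 1" using sin_3pi2 by (simp add: sin_minus)
    ultimately show ?thesis by (simp add: sin_2pi_minus sin_minus)
  qed
qed

lemma int_unit:
  fixes c :: "real \<times> real"
  assumes "norm c = 1"
  shows "((\<lambda>\<theta>. max 0 (- (c \<bullet> (cos \<theta>, sin \<theta>)))) has_integral 2) {0..2*pi}"
proof -
  obtain x y where c: "c = (- x, - y)" by (metis minus_equation_iff surj_pair)
  have "x\<^sup>2 + y\<^sup>2 = 1" using assms c by (simp add: norm_Pair)
  then obtain \<psi> where \<psi>: "0 \<le> \<psi>" "\<psi> < 2*pi" "x = cos \<psi>" "y = sin \<psi>"
    by (rule sincos_total_2pi)
  have "- (c \<bullet> (cos \<theta>, sin \<theta>)) = cos (\<theta> - \<psi>)" for \<theta>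
    using c \<psi> by (simp add: cos_diff algebra_simps)
  then show ?thesis using int_cos_plus[OF \<psi>(1,2)] by simp
qed

lemma polygon_setup:
  fixes T :: "(real \<times> real) set"
  assumes "convex_polygon T"
  obtains F a b where "poly2 T F a b"
    and "perimeter T = (\<Sum>h\<in>F. diameter (poly2.E T a b h))"
proof -
  have pT: "polytope T" and adT: "aff_dim T = 2" using assms by (auto simp: convex_polygon_def)
  have cT: "compact T" using pT polytope_imp_compact by blast
  have ahT: "affine hull T = UNIV"
    using adT aff_dim_eq_full[of T] by simp
  have "polyhedron T" using pT polytope_imp_polyhedron by blast
  then obtain F where finF: "finite F" and seq: "T = affine hull T \<inter> \<Inter>F"
    and hs: "\<forall>h\<in>F. \<exists>a b. a \<noteq> 0 \<and> h = {x. a \<bullet> x \<le> b}"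
    and psub: "\<forall>F'. F' \<subset> F \<longrightarrow> T \<subset> affine hull T \<inter> \<Inter>F'"
    unfolding polyhedron_Int_affine_minimal by blast
  define ab where "ab h = (SOME p. norm (fst p) = 1 \<and> (\<forall>x. x \<in> h \<longleftrightarrow> fst p \<bullet> x \<le> snd p))" for h :: "(real\<times>real) set"
  define a where "a h = fst (ab h)" for h
  define b where "b h = snd (ab h)" for h
  have ab: "norm (a h) = 1 \<and> (\<forall>x. x \<in> h \<longleftrightarrow> a h \<bullet> x \<le> b h)" if h: "h \<in> F" for h
  proof -
    obtain a0 b0 where a0: "a0 \<noteq> 0" "h = {x. a0 \<bullet> x \<le> b0}" using hs h by blast
    have n: "norm a0 > 0" using a0 by simp
    have *: "x \<in> h \<longleftrightarrow> (a0 /\<^sub>R norm a0) \<bullet> x \<le> b0 / norm a0" for x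
    proof -
      have "(a0 /\<^sub>R norm a0) \<bullet> x = (a0 \<bullet> x) / norm a0" by (simp add: divide_inverse mult.commute)
      then have "(a0 /\<^sub>R norm a0) \<bullet> x \<le> b0 / norm a0 \<longleftrightarrow> a0 \<bullet> x \<le> b0" using n by (simp add: divide_le_cancel)
      moreover have "x \<in> h \<longleftrightarrow> a0 \<bullet> x \<le> b0" by (subst a0(2)) (rule mem_Collect_eq)
      ultimately show ?thesis by simp
    qed
    have "norm (a0 /\<^sub>R norm a0) = 1" using a0 by simp
    then have "\<exists>p. norm (fst p) = 1 \<and> (\<forall>x. x \<in> h \<longleftrightarrow> fst p \<bullet> x \<le> snd p)"
      using * by (intro exI[of _ "(a0 /\<^sub>R norm a0, b0 / norm a0)"]) simp
    then show ?thesis unfolding a_def b_def ab_def by (rule someI_ex)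
  qed
  have abn: "norm (a h) = 1" if "h \<in> F" for h using ab[OF that] by (rule conjunct1)
  have memh: "x \<in> h \<longleftrightarrow> a h \<bullet> x \<le> b h" if "h \<in> F" for h x by (rule spec[OF conjunct2[OF ab[OF that]]])
  have abh: "h = {x. a h \<bullet> x \<le> b h}" if "h \<in> F" for h using memh[OF that] by (intro set_eqI) simp
  have Tdef: "T = {x. \<forall>h\<in>F. a h \<bullet> x \<le> b h}"
  proof -
    have "T = \<Inter>F" using seq unfolding ahT by simp
    also have "\<dots> = {x. \<forall>h\<in>F. a h \<bullet> x \<le> b h}" using memh by (intro set_eqI) simp
    finally show ?thesis .
  qed
  have memT: "x \<in> T \<longleftrightarrow> (\<forall>h\<in>F. a h \<bullet> x \<le> b h)" for x by (subst Tdef) (rule mem_Collect_eq)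
  have faceq: "\<And>h. h \<in> F \<Longrightarrow> a h \<noteq> 0 \<and> h = {x. a h \<bullet> x \<le> b h}"
  proof -
    fix h assume h: "h \<in> F"
    have "a h \<noteq> 0" using abn[OF h] by auto
    then show "a h \<noteq> 0 \<and> h = {x. a h \<bullet> x \<le> b h}" by (rule conjI[OF _ abh[OF h]])
  qed
  have facet: "C facet_of T \<longleftrightarrow> (\<exists>h. h \<in> F \<and> C = T \<inter> {x. a h \<bullet> x = b h})" for C
  proof -
    have psub': "\<And>F'. F' \<subset> F \<Longrightarrow> T \<subset> affine hull T \<inter> \<Inter>F'" by (rule psub[rule_format])
    show ?thesis by (rule facet_of_polyhedron_explicit[OF finF seq faceq psub'])
  qed
  define E where "E h = T \<inter> {x. a h \<bullet> x = b h}" for h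
  have Efacet: "E h facet_of T" if "h \<in> F" for h
    unfolding facet E_def using that by (intro exI[of _ h]) simp
  have Eface: "E h face_of T" "E h \<noteq> {}" "aff_dim (E h) = 1" if "h \<in> F" for h
    using Efacet[OF that] unfolding facet_of_def adT by simp_all
  have seg: "\<exists>v w. T \<inter> {x. a h \<bullet> x = b h} = closed_segment v w" if h: "h \<in> F" for h
  proof -
    have "polytope (E h)" using face_of_polytope_polytope[OF pT Eface(1)[OF h]] .
    then have "compact (E h)" "convex (E h)" using polytope_imp_compact polytope_imp_convex by auto
    moreover have "collinear (E h)" using Eface(3)[OF h] by (simp add: collinear_aff_dim)
    ultimately obtain v w where "E h = closed_segment v w"
      by (rule compact_convex_collinear_segment[OF Eface(2)[OF h]])
    then show ?thesis unfolding E_def by (intro exI)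
  qed
  have P: "poly2 T F a b"
  proof
    show "finite F" by (rule finF)
    show "T = {x. \<forall>h\<in>F. a h \<bullet> x \<le> b h}" by (rule Tdef)
    show "\<And>h. h \<in> F \<Longrightarrow> h = {x. a h \<bullet> x \<le> b h}" by (rule abh)
    show "\<And>h. h \<in> F \<Longrightarrow> norm (a h) = 1" by (rule abn)
    show "\<And>h. h \<in> F \<Longrightarrow> \<exists>v w. T \<inter> {x. a h \<bullet> x = b h} = closed_segment v w" by (rule seg)
    show "compact T" by (rule cT)
  qed
  have Eeq: "poly2.E T a b = E"
    by (rule ext) (simp add: poly2.E_def[OF P] E_def)
  have inj: "inj_on E F"
  proof (rule inj_onI)
    fix h h' assume h: "h \<in> F" and h': "h' \<in> F" and eq: "E h = E h'"
    obtain y where y: "y \<in> E h" using Eface(2)[OF h] by blast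
    have "\<exists>z\<in>E h. z \<noteq> y"
    proof (rule ccontr)
      assume "\<not> ?thesis"
      then have "E h = {y}" using y by blast
      then show False using Eface(3)[OF h] by simp
    qed
    then obtain z where z: "z \<in> E h" "z \<noteq> y" by blast
    have yz': "y \<in> E h'" "z \<in> E h'" using y z eq by auto
    have "a h \<bullet> (y - z) = 0" "a h' \<bullet> (y - z) = 0"
      using y z yz' by (auto simp: E_def inner_diff_right)
    then have "a h' = a h \<or> a h' = - a h"
      using two_perp[of "a h" "a h'" "y - z"] abn[OF h] abn[OF h'] z by auto
    then show "h = h'"
    proof
      assume e: "a h' = a h"
      then have "b h' = b h" using y eq by (auto simp: E_def)
      have "h = {x. a h \<bullet> x \<le> b h}" by (rule abh[OF h])
      also have "\<dots> = {x. a h' \<bullet> x \<le> b h'}" using e \<open>b h' = b h\<close> by simp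
      also have "\<dots> = h'" by (rule abh[OF h', symmetric])
      finally show "h = h'" .
    next
      assume e: "a h' = - a h"
      then have "b h' = - b h" using y eq by (auto simp: E_def)
      have "T \<subseteq> {x. a h \<bullet> x = b h}"
      proof
        fix x assume "x \<in> T"
        then have "a h \<bullet> x \<le> b h" "a h' \<bullet> x \<le> b h'" using memT h h' by auto
        then show "x \<in> {x. a h \<bullet> x = b h}" using e \<open>b h' = - b h\<close> by simp
      qed
      then have "aff_dim T \<le> aff_dim {x. a h \<bullet> x = b h}" by (rule aff_dim_subset)
      also have "\<dots> = 1" using faceq[OF h] by simp
      finally show "h = h'" using adT by simp
    qed
  qed
  have "{E. E face_of T \<and> aff_dim E = 1} = E ` F"
  proof -
    have "C face_of T \<and> aff_dim C = 1 \<longleftrightarrow> C facet_of T" for C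
      using adT by (auto simp: facet_of_def)
    note iff = this
    show ?thesis
    proof (rule set_eqI)
      fix C
      have "C \<in> {E. E face_of T \<and> aff_dim E = 1} \<longleftrightarrow> C facet_of T" using iff by simp
      also have "\<dots> \<longleftrightarrow> (\<exists>h. h \<in> F \<and> C = T \<inter> {x. a h \<bullet> x = b h})" by (rule facet)
      also have "\<dots> \<longleftrightarrow> C \<in> E ` F" by (simp add: E_def image_iff Bex_def)
      finally show "C \<in> {E. E face_of T \<and> aff_dim E = 1} \<longleftrightarrow> C \<in> E ` F" .
    qed
  qed
  then have "perimeter T = (\<Sum>h\<in>F. diameter (E h))"
    unfolding perimeter_def by (simp add: sum.reindex[OF inj])
  then show ?thesis using that P Eeq by simp
qed

lemma sensor_iff:
  fixes T :: "(real \<times> real) set"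
  assumes cT: "compact T" and r: "0 \<le> r" "r \<le> rmax"
  shows "(\<exists>d. sensor_dist T rmax p \<theta> = Some d \<and> d \<le> r) \<longleftrightarrow>
         (\<exists>t\<in>{0..r}. p + t *\<^sub>R (cos \<theta>, sin \<theta>) \<in> T)"
proof -
  define D where "D = {t\<in>{0..rmax}. (fst p + t * cos \<theta>, snd p + t * sin \<theta>) \<in> T}"
  have pt: "(fst p + t * cos \<theta>, snd p + t * sin \<theta>) = p + t *\<^sub>R (cos \<theta>, sin \<theta>)" for t
    by (simp add: prod_eq_iff)
  have D: "D = {t\<in>{0..rmax}. p + t *\<^sub>R (cos \<theta>, sin \<theta>) \<in> T}" unfolding D_def pt ..
  have sd: "sensor_dist T rmax p \<theta> = (if D = {} then None else Some (Inf D))"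
    unfolding sensor_dist_def D_def Let_def ..
  have bdd: "bdd_below D" by (auto simp: D bdd_below_def)
  show ?thesis
  proof
    assume "\<exists>d. sensor_dist T rmax p \<theta> = Some d \<and> d \<le> r"
    then obtain d where d: "sensor_dist T rmax p \<theta> = Some d" "d \<le> r" by blast
    then have ne: "D \<noteq> {}" and dD: "d = Inf D" using sd by (auto split: if_splits)
    have "closed D"
    proof -
      have "closed ((\<lambda>t. p + t *\<^sub>R (cos \<theta>, sin \<theta>)) -` T)"
        by (rule continuous_closed_vimage) (auto intro!: continuous_intros simp: cT compact_imp_closed)
      then have "closed ({0..rmax} \<inter> (\<lambda>t. p + t *\<^sub>R (cos \<theta>, sin \<theta>)) -` T)" by (intro closed_Int) auto
      moreover have "D = {0..rmax} \<inter> (\<lambda>t. p + t *\<^sub>R (cos \<theta>, sin \<theta>)) -` T" by (auto simp: D)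
      ultimately show ?thesis by simp
    qed
    then have "Inf D \<in> D" using closed_contains_Inf ne bdd by blast
    then show "\<exists>t\<in>{0..r}. p + t *\<^sub>R (cos \<theta>, sin \<theta>) \<in> T"
      using d(2) dD by (intro bexI[where x="Inf D"]) (auto simp: D)
  next
    assume "\<exists>t\<in>{0..r}. p + t *\<^sub>R (cos \<theta>, sin \<theta>) \<in> T"
    then obtain t where t: "t \<in> {0..r}" "p + t *\<^sub>R (cos \<theta>, sin \<theta>) \<in> T" by blast
    then have tD: "t \<in> D" using r by (auto simp: D)
    then have "D \<noteq> {}" by auto
    moreover have "Inf D \<le> t" using tD bdd by (rule cInf_lower)
    ultimately show "\<exists>d. sensor_dist T rmax p \<theta> = Some d \<and> d \<le> r"
      using t sd by auto
  qed
qed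

context poly2
begin

lemma measure_Z:
  assumes r: "r \<ge> 0"
  shows "measure lebesgue {(p,\<theta>). (\<exists>t\<in>{0..r}. p + t *\<^sub>R (cos \<theta>, sin \<theta>) \<in> T) \<and> \<theta> \<in> {0..<2*pi}}
         = 2*pi*measure lebesgue T + 2*r*(\<Sum>h\<in>F. diameter (E h))"
proof -
  define u where "u \<theta> = (cos \<theta>, sin \<theta>)" for \<theta> :: real
  define Z where "Z = {(p,\<theta>). (\<exists>t\<in>{0..r}. p + t *\<^sub>R (cos \<theta>, sin \<theta>) \<in> T) \<and> \<theta> \<in> {0..<2*pi}}"
  define K where "K = (\<lambda>((q,\<theta>),t). (q - t *\<^sub>R u \<theta>, \<theta>)) ` ((T \<times> {0..2*pi}) \<times> {0..r})"
  have cK: "compact K" unfolding K_def u_def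
    by (intro compact_continuous_image compact_Times cT compact_Icc)
       (auto intro!: continuous_intros simp: case_prod_unfold)
  have ZK: "Z = K \<inter> (UNIV \<times> {0..<2*pi})"
  proof (rule set_eqI, rule iffI)
    fix z assume "z \<in> Z"
    then obtain p \<theta> t where z: "z = (p, \<theta>)" "t \<in> {0..r}" "p + t *\<^sub>R u \<theta> \<in> T" "\<theta> \<in> {0..<2*pi}"
      by (auto simp: Z_def u_def)
    have "z \<in> K" unfolding K_def
      by (rule image_eqI[where x="((p + t *\<^sub>R u \<theta>, \<theta>), t)"]) (use z in auto)
    then show "z \<in> K \<inter> (UNIV \<times> {0..<2*pi})" using z by auto
  next
    fix z assume "z \<in> K \<inter> (UNIV \<times> {0..<2*pi})"
    then obtain q \<theta> t where z: "z = (q - t *\<^sub>R u \<theta>, \<theta>)" "q \<in> T" "t \<in> {0..r}" "\<theta> \<in> {0..<2*pi}"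
      by (auto simp: K_def)
    then show "z \<in> Z" by (auto simp: Z_def u_def intro!: bexI[where x=t])
  qed
  have Zb: "Z \<in> sets borel"
  proof -
    have "K \<in> sets borel" by (rule borel_compact[OF cK])
    moreover have "UNIV \<times> {0..<2*pi} = snd -` {0..<2*pi :: real}" by auto
    moreover have "snd -` {0..<2*pi :: real} \<in> sets (borel :: ((real\<times>real)\<times>real) measure)"
    proof -
      have "snd \<in> borel_measurable (borel :: ((real\<times>real)\<times>real) measure)"
        by (rule borel_measurable_continuous_onI) (intro continuous_intros)
      then have "snd -` {0..<2*pi :: real} \<inter> space borel \<in> sets (borel :: ((real\<times>real)\<times>real) measure)"
        by (rule measurable_sets) simp
      then show ?thesis by simp
    qed
    ultimately show ?thesis unfolding ZK by (metis sets.Int)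
  qed
  define c where "c \<theta> = measure lebesgue T + r * (\<Sum>h\<in>F. diameter (E h) * max 0 (- (a h \<bullet> u \<theta>)))" for \<theta>
  define f where "f \<theta> = indicator {0..<2*pi} \<theta> * c \<theta>" for \<theta> :: real
  have slice: "(\<lambda>p. (p, \<theta>)) -` Z = (if \<theta> \<in> {0..<2*pi} then S (u \<theta>) r else {})" for \<theta>
    by (auto simp: Z_def S_def u_def)
  have em_slice: "emeasure lborel ((\<lambda>p. (p, \<theta>)) -` Z) = ennreal (f \<theta>)" for \<theta>
  proof (cases "\<theta> \<in> {0..<2*pi}")
    case True
    have cS: "compact (S (u \<theta>) r)" by (rule compact_S[OF r])
    have "emeasure lborel (S (u \<theta>) r) = emeasure lebesgue (S (u \<theta>) r)"
      using cS by (simp add: borel_compact)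
    also have "\<dots> = ennreal (measure lebesgue (S (u \<theta>) r))"
    proof (rule emeasure_eq_ennreal_measure)
      have "S (u \<theta>) r \<in> lmeasurable" using cS by (rule lmeasurable_compact)
      then show "emeasure lebesgue (S (u \<theta>) r) \<noteq> top" by (rule fmeasurableD2)
    qed
    also have "\<dots> = ennreal (c \<theta>)" using area_S[OF r] by (simp add: c_def)
    finally show ?thesis using True by (simp add: slice f_def)
  qed (auto simp: slice f_def)
  have diam_nn: "diameter (E h) \<ge> 0" for h by (rule diameter_ge_0[OF bounded_subset[OF compact_imp_bounded[OF cT] E_sub]])
  have c_nn: "c \<theta> \<ge> 0" for \<theta>
    unfolding c_def using r diam_nn by (intro add_nonneg_nonneg mult_nonneg_nonneg sum_nonneg) auto
  have f_nn: "f \<theta> \<ge> 0" for \<theta> using c_nn by (simp add: f_def)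
  have c_cont: "continuous_on UNIV c"
    unfolding c_def u_def by (intro continuous_intros)
  have f_meas: "f \<in> borel_measurable borel"
    unfolding f_def using c_cont
    by (intro borel_measurable_times borel_measurable_indicator borel_measurable_continuous_onI) auto
  define L where "L = (\<Sum>h\<in>F. diameter (E h))"
  define I where "I = 2*pi*measure lebesgue T + 2*r*L"
  have int_c: "(c has_integral I) {0..2*pi}"
  proof -
    note has_integral_const_real[of "measure lebesgue T" 0 "2*pi"]
    then have 1: "((\<lambda>\<theta>. measure lebesgue T) has_integral (2*pi*measure lebesgue T)) {0..2*pi}"
      by simp
    have "((\<lambda>\<theta>. \<Sum>h\<in>F. diameter (E h) * max 0 (- (a h \<bullet> u \<theta>))) has_integral (\<Sum>h\<in>F. diameter (E h) * 2)) {0..2*pi}"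
    proof (rule has_integral_sum[OF finF])
      fix h assume "h \<in> F"
      then have "((\<lambda>\<theta>. max 0 (- (a h \<bullet> u \<theta>))) has_integral 2) {0..2*pi}"
        unfolding u_def by (intro int_unit unit)
      then show "((\<lambda>\<theta>. diameter (E h) * max 0 (- (a h \<bullet> u \<theta>))) has_integral (diameter (E h) * 2)) {0..2*pi}"
        by (rule has_integral_mult_right)
    qed
    then have 2: "((\<lambda>\<theta>. r * (\<Sum>h\<in>F. diameter (E h) * max 0 (- (a h \<bullet> u \<theta>)))) has_integral (r * (\<Sum>h\<in>F. diameter (E h) * 2))) {0..2*pi}"
      by (rule has_integral_mult_right)
    have "(c has_integral (2*pi*measure lebesgue T + r * (\<Sum>h\<in>F. diameter (E h) * 2))) {0..2*pi}"
      unfolding c_def by (rule has_integral_add[OF 1 2])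
    moreover have "r * (\<Sum>h\<in>F. diameter (E h) * 2) = 2*r*L"
      by (simp add: L_def sum_distrib_left[symmetric] algebra_simps)
    ultimately show ?thesis by (simp add: I_def)
  qed
  have int_c': "(c has_integral I) {0..<2*pi}"
  proof -
    have "negligible {x \<in> {0..2*pi} - {0..<2*pi}. c x \<noteq> 0}"
      by (rule negligible_subset[of "{2*pi}"]) auto
    moreover have "negligible {x \<in> {0..<2*pi} - {0..2*pi}. c x \<noteq> 0}"
      by (rule negligible_subset[of "{}"]) auto
    ultimately show ?thesis using int_c has_integral_spike_set_eq by blast
  qed
  have int_f: "(f has_integral I) UNIV"
  proof -
    have "f = (\<lambda>x. if x \<in> {0..<2*pi} then c x else 0)" by (auto simp: f_def indicator_def)
    then show ?thesis using int_c' has_integral_restrict_UNIV by metis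
  qed
  have "emeasure lborel Z = emeasure (lborel \<Otimes>\<^sub>M lborel) Z"
    by (simp only: lborel_prod)
  also have "\<dots> = (\<integral>\<^sup>+\<theta>. emeasure lborel ((\<lambda>p. (p, \<theta>)) -` Z) \<partial>lborel)"
  proof (rule lborel_pair.emeasure_pair_measure_alt2)
    have "sets (lborel \<Otimes>\<^sub>M lborel) = sets (borel :: ((real\<times>real)\<times>real) measure)"
      by (simp only: lborel_prod sets_lborel)
    then show "Z \<in> sets (lborel \<Otimes>\<^sub>M lborel)" using Zb by simp
  qed
  also have "\<dots> = (\<integral>\<^sup>+\<theta>. ennreal (f \<theta>) \<partial>lborel)"
    by (simp add: em_slice)
  also have "\<dots> = ennreal I"
    by (rule nn_integral_has_integral_lborel[OF f_meas f_nn int_f])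
  finally have "emeasure lborel Z = ennreal I" .
  then have "emeasure lebesgue Z = ennreal I" using Zb by simp
  moreover have "I \<ge> 0" unfolding I_def L_def using r diam_nn
    by (intro add_nonneg_nonneg mult_nonneg_nonneg sum_nonneg) auto
  ultimately have "measure lebesgue Z = I" by (simp add: measure_def)
  then show ?thesis by (simp add: Z_def I_def L_def)
qed

end

theorem theorem1:
  fixes \<Omega> T :: "(real \<times> real) set" and rmax r :: real
  assumes "\<Omega> \<in> sets lebesgue" and "emeasure lebesgue \<Omega> < \<infinity>"
    and "convex_polygon T" and "T \<subseteq> \<Omega>"
    and "rmax > 0"
    and "\<And>p. infdist p T \<le> rmax \<Longrightarrow> p \<in> \<Omega>"
    and "0 \<le> r" and "r \<le> rmax"
  shows "geom_prob \<Omega> {(p, \<theta>). \<exists>d. sensor_dist T rmax p \<theta> = Some d \<and> d \<le> r}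
         = (r * perimeter T + pi * area T) / (pi * area \<Omega>)"
proof -
  obtain F a b where P: "poly2 T F a b"
    and per: "perimeter T = (\<Sum>h\<in>F. diameter (poly2.E T a b h))"
    using polygon_setup[OF assms(3)] by blast
  interpret poly2 T F a b by (rule P)
  have Y: "{(p, \<theta>). \<exists>d. sensor_dist T rmax p \<theta> = Some d \<and> d \<le> r} \<inter> (\<Omega> \<times> {0..<2*pi})
     = {(p,\<theta>). (\<exists>t\<in>{0..r}. p + t *\<^sub>R (cos \<theta>, sin \<theta>) \<in> T) \<and> \<theta> \<in> {0..<2*pi}}"
  proof (rule set_eqI)
    fix z :: "(real \<times> real) \<times> real"
    obtain p \<theta> where z: "z = (p, \<theta>)" by (cases z)
    have inO: "p \<in> \<Omega>" if ex: "\<exists>t\<in>{0..r}. p + t *\<^sub>R (cos \<theta>, sin \<theta>) \<in> T"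
    proof -
      obtain t where t: "t \<in> {0..r}" "p + t *\<^sub>R (cos \<theta>, sin \<theta>) \<in> T" using ex by blast
      have "infdist p T \<le> dist p (p + t *\<^sub>R (cos \<theta>, sin \<theta>))" by (rule infdist_le[OF t(2)])
      also have "\<dots> = t"
      proof -
        have "(t * cos \<theta>)\<^sup>2 + (t * sin \<theta>)\<^sup>2 = t\<^sup>2"
          by (simp add: power_mult_distrib flip: distrib_left)
        then show ?thesis using t(1) by (simp add: dist_norm norm_Pair)
      qed
      also have "\<dots> \<le> rmax" using t(1) assms(8) by simp
      finally show ?thesis by (rule assms(6))
    qed
    show "z \<in> {(p, \<theta>). \<exists>d. sensor_dist T rmax p \<theta> = Some d \<and> d \<le> r} \<inter> (\<Omega> \<times> {0..<2*pi}) \<longleftrightarrow>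
          z \<in> {(p,\<theta>). (\<exists>t\<in>{0..r}. p + t *\<^sub>R (cos \<theta>, sin \<theta>) \<in> T) \<and> \<theta> \<in> {0..<2*pi}}"
      using sensor_iff[OF cT assms(7,8), of p \<theta>] inO unfolding z by auto
  qed
  have "geom_prob \<Omega> {(p, \<theta>). \<exists>d. sensor_dist T rmax p \<theta> = Some d \<and> d \<le> r}
      = (2*pi*area T + 2*r*perimeter T) / (2 * pi * area \<Omega>)"
    unfolding geom_prob_def Y using measure_Z[OF assms(7)] by (simp add: per area_def)
  also have "\<dots> = (r * perimeter T + pi * area T) / (pi * area \<Omega>)"
  proof -
    have "2*pi*area T + 2*r*perimeter T = 2 * (r * perimeter T + pi * area T)" by (simp add: algebra_simps)
    moreover have "2 * pi * area \<Omega> = 2 * (pi * area \<Omega>)" by simp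
    ultimately show ?thesis by (simp only: mult_divide_mult_cancel_left_if) simp
  qed
  finally show ?thesis .
qed


end
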